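(* Let $A$ be a strongly AUF algebra and let $e\in A$ be a generating idempotent. Then the $A$-$(eAe)$ bimodule $Ae$ has a left coordinate system. In particular, $Ae$ is a projective right $eAe$-module.
   Context: All algebras are associative $\mathbb C$-algebras, not necessarily unital. An idempotent is an element $e$ with $e^2=e$. An algebra $A$ is AUF if there is a family $(e_i)_{i\in\mathfrak I}$ of mutually orthogonal idempotents with $\dim e_iAe_j<\infty$ and $A=\sum_{i,j}e_iAe_j$. A left $A$-module $M$ is quasicoherent if $\xi\in A\xi$ for all $\xi\in M$. Irreducible means nonzero with no nonzero proper submodules. An idempotent $e$ is generating if every irreducible quasicoherent left $A$-module is a quotient of $Ae$; $A$ is strongly AUF if it is AUF and has a generating idempotent. The algebra $eAe$ is unital with unit $e$. A left coordinate system of an $A$-$B$ bimodule $M$ ($B$ unital) is a family of right $B$-module maps $\alpha_i:B\to M$, $\check\alpha^i:M\to B$, $i\in I$, such that (a) for each $\xi\in M$, $\check\alpha^i(\xi)=0$ for all but finitely many $i$ and $\sum_i\alpha_i\check\alpha^i(\xi)=\xi$; (b) for each $x\in A$ (acting on $M$), $x\circ\alpha_i=0$ and $\check\alpha^i\circ x=0$ for all but finitely many $i$. *)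

theory Defs
  imports Complex_Main
begin

text \<open>The algebra A is the whole type 'a (class ring: associative, not necessarily
unital), together with a complex scalar multiplication smul making it a
complex algebra.\<close>

definition calg :: "(complex \<Rightarrow> 'a::ring \<Rightarrow> 'a) \<Rightarrow> bool" where
  "calg smul \<longleftrightarrow> vector_space smul \<and>
     (\<forall>c x y. smul c (x * y) = smul c x * y \<and> smul c (x * y) = x * smul c y)"

definition findim :: "(complex \<Rightarrow> 'a::ring \<Rightarrow> 'a) \<Rightarrow> 'a set \<Rightarrow> bool" where
  "findim smul S \<longleftrightarrow> (\<exists>F. finite F \<and> F \<subseteq> S \<and> S \<subseteq> module.span smul F)"

definition corner :: "'a::ring \<Rightarrow> 'a \<Rightarrow> 'a set" where
  "corner e f = {e * x * f | x. True}"

definition lideal :: "'a::ring \<Rightarrow> 'a set" where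
  "lideal e = {x * e | x. True}"

definition AUF :: "(complex \<Rightarrow> 'a::ring \<Rightarrow> 'a) \<Rightarrow> bool" where
  "AUF smul \<longleftrightarrow> (\<exists>E::'a set.
     (\<forall>e\<in>E. e * e = e) \<and>
     (\<forall>e\<in>E. \<forall>f\<in>E. e \<noteq> f \<longrightarrow> e * f = 0) \<and>
     (\<forall>e\<in>E. \<forall>f\<in>E. findim smul (corner e f)) \<and>
     UNIV \<subseteq> module.span smul (\<Union>e\<in>E. \<Union>f\<in>E. corner e f))"

text \<open>Modules given explicitly by carrier and operations. For a left A-module
mact x m is x.m; for a right module mact b m is m.b.\<close>
record ('m, 'a) amod =
  mcarrier :: "'m set"
  madd :: "'m \<Rightarrow> 'm \<Rightarrow> 'm"
  mzero :: "'m"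
  mscal :: "complex \<Rightarrow> 'm \<Rightarrow> 'm"
  mact :: "'a \<Rightarrow> 'm \<Rightarrow> 'm"

definition cvs :: "('m, 'a) amod \<Rightarrow> bool" where
  "cvs M \<longleftrightarrow> (let C = mcarrier M; ad = madd M; z = mzero M; sc = mscal M in
     z \<in> C \<and>
     (\<forall>u\<in>C. \<forall>v\<in>C. ad u v \<in> C) \<and>
     (\<forall>c. \<forall>u\<in>C. sc c u \<in> C) \<and>
     (\<forall>u\<in>C. \<forall>v\<in>C. \<forall>w\<in>C. ad (ad u v) w = ad u (ad v w)) \<and>
     (\<forall>u\<in>C. \<forall>v\<in>C. ad u v = ad v u) \<and>
     (\<forall>u\<in>C. ad z u = u) \<and>
     (\<forall>u\<in>C. \<exists>v\<in>C. ad u v = z) \<and>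
     (\<forall>c. \<forall>u\<in>C. \<forall>v\<in>C. sc c (ad u v) = ad (sc c u) (sc c v)) \<and>
     (\<forall>c d. \<forall>u\<in>C. sc (c + d) u = ad (sc c u) (sc d u)) \<and>
     (\<forall>c d. \<forall>u\<in>C. sc c (sc d u) = sc (c * d) u) \<and>
     (\<forall>u\<in>C. sc 1 u = u))"

definition lmod :: "(complex \<Rightarrow> 'a::ring \<Rightarrow> 'a) \<Rightarrow> ('m, 'a) amod \<Rightarrow> bool" where
  "lmod smul M \<longleftrightarrow> cvs M \<and>
     (let C = mcarrier M; ad = madd M; sc = mscal M; act = mact M in
     (\<forall>x. \<forall>u\<in>C. act x u \<in> C) \<and>
     (\<forall>x. \<forall>u\<in>C. \<forall>v\<in>C. act x (ad u v) = ad (act x u) (act x v)) \<and>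
     (\<forall>x y. \<forall>u\<in>C. act (x + y) u = ad (act x u) (act y u)) \<and>
     (\<forall>c x. \<forall>u\<in>C. act (smul c x) u = sc c (act x u)) \<and>
     (\<forall>c x. \<forall>u\<in>C. act x (sc c u) = sc c (act x u)) \<and>
     (\<forall>x y. \<forall>u\<in>C. act (x * y) u = act x (act y u)))"

definition quasicoherent :: "('m, 'a) amod \<Rightarrow> bool" where
  "quasicoherent M \<longleftrightarrow> (\<forall>u\<in>mcarrier M. \<exists>x. mact M x u = u)"

definition lsubmod :: "('m, 'a) amod \<Rightarrow> 'm set \<Rightarrow> bool" where
  "lsubmod M N \<longleftrightarrow> N \<subseteq> mcarrier M \<and> mzero M \<in> N \<and>
     (\<forall>u\<in>N. \<forall>v\<in>N. madd M u v \<in> N) \<and>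
     (\<forall>c. \<forall>u\<in>N. mscal M c u \<in> N) \<and>
     (\<forall>x. \<forall>u\<in>N. mact M x u \<in> N)"

definition irreducible_mod :: "('m, 'a) amod \<Rightarrow> bool" where
  "irreducible_mod M \<longleftrightarrow> mcarrier M \<noteq> {mzero M} \<and>
     (\<forall>N. lsubmod M N \<longrightarrow> N = {mzero M} \<or> N = mcarrier M)"

definition lhom_from_Ae :: "(complex \<Rightarrow> 'a::ring \<Rightarrow> 'a) \<Rightarrow> 'a \<Rightarrow> ('m, 'a) amod \<Rightarrow> ('a \<Rightarrow> 'm) \<Rightarrow> bool" where
  "lhom_from_Ae smul e M f \<longleftrightarrow>
     (\<forall>u\<in>lideal e. f u \<in> mcarrier M) \<and>
     (\<forall>u\<in>lideal e. \<forall>v\<in>lideal e. f (u + v) = madd M (f u) (f v)) \<and>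
     (\<forall>c. \<forall>u\<in>lideal e. f (smul c u) = mscal M c (f u)) \<and>
     (\<forall>x. \<forall>u\<in>lideal e. f (x * u) = mact M x (f u))"

text \<open>Modules are taken with carrier in type 'a set; every
irreducible quasicoherent module is isomorphic to one of these (a quotient A/L
with cosets as elements), and being a quotient of A e is isomorphism invariant.\<close>
definition generating :: "(complex \<Rightarrow> 'a::ring \<Rightarrow> 'a) \<Rightarrow> 'a \<Rightarrow> bool" where
  "generating smul e \<longleftrightarrow> e * e = e \<and>
     (\<forall>M :: ('a set, 'a) amod. lmod smul M \<and> quasicoherent M \<and> irreducible_mod M \<longrightarrow>
        (\<exists>f. lhom_from_Ae smul e M f \<and> f ` lideal e = mcarrier M))"

definition strongly_AUF :: "(complex \<Rightarrow> 'a::ring \<Rightarrow> 'a) \<Rightarrow> bool" where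
  "strongly_AUF smul \<longleftrightarrow> AUF smul \<and> (\<exists>e. generating smul e)"

definition rmap :: "(complex \<Rightarrow> 'a::ring \<Rightarrow> 'a) \<Rightarrow> 'a \<Rightarrow> 'a set \<Rightarrow> 'a set \<Rightarrow> ('a \<Rightarrow> 'a) \<Rightarrow> bool" where
  "rmap smul e S T f \<longleftrightarrow>
     (\<forall>u\<in>S. f u \<in> T) \<and>
     (\<forall>u\<in>S. \<forall>v\<in>S. f (u + v) = f u + f v) \<and>
     (\<forall>c. \<forall>u\<in>S. f (smul c u) = smul c (f u)) \<and>
     (\<forall>u\<in>S. \<forall>b\<in>corner e e. f (u * b) = f u * b)"

definition left_coord_system ::
  "(complex \<Rightarrow> 'a::ring \<Rightarrow> 'a) \<Rightarrow> 'a \<Rightarrow> 'i set \<Rightarrow> ('i \<Rightarrow> 'a \<Rightarrow> 'a) \<Rightarrow> ('i \<Rightarrow> 'a \<Rightarrow> 'a) \<Rightarrow> bool" where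
  "left_coord_system smul e I \<alpha> \<alpha>c \<longleftrightarrow>
     (\<forall>i\<in>I. rmap smul e (corner e e) (lideal e) (\<alpha> i)) \<and>
     (\<forall>i\<in>I. rmap smul e (lideal e) (corner e e) (\<alpha>c i)) \<and>
     (\<forall>\<xi>\<in>lideal e. finite {i\<in>I. \<alpha>c i \<xi> \<noteq> 0} \<and>
        (\<Sum>i\<in>{i\<in>I. \<alpha>c i \<xi> \<noteq> 0}. \<alpha> i (\<alpha>c i \<xi>)) = \<xi>) \<and>
     (\<forall>x. finite {i\<in>I. \<exists>b\<in>corner e e. x * \<alpha> i b \<noteq> 0} \<and>
          finite {i\<in>I. \<exists>\<xi>\<in>lideal e. \<alpha>c i (x * \<xi>) \<noteq> 0})"

text \<open>Right eAe-modules (unital, e acts as identity); mact b m means m.b.\<close>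
definition rmod :: "(complex \<Rightarrow> 'a::ring \<Rightarrow> 'a) \<Rightarrow> 'a \<Rightarrow> ('m, 'a) amod \<Rightarrow> bool" where
  "rmod smul e M \<longleftrightarrow> cvs M \<and>
     (let C = mcarrier M; ad = madd M; sc = mscal M; act = mact M; B = corner e e in
     (\<forall>b\<in>B. \<forall>u\<in>C. act b u \<in> C) \<and>
     (\<forall>b\<in>B. \<forall>u\<in>C. \<forall>v\<in>C. act b (ad u v) = ad (act b u) (act b v)) \<and>
     (\<forall>b\<in>B. \<forall>b'\<in>B. \<forall>u\<in>C. act (b + b') u = ad (act b u) (act b' u)) \<and>
     (\<forall>c. \<forall>b\<in>B. \<forall>u\<in>C. act (smul c b) u = sc c (act b u)) \<and>
     (\<forall>c. \<forall>b\<in>B. \<forall>u\<in>C. act b (sc c u) = sc c (act b u)) \<and>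
     (\<forall>b\<in>B. \<forall>b'\<in>B. \<forall>u\<in>C. act (b * b') u = act b' (act b u)) \<and>
     (\<forall>u\<in>C. act e u = u))"

definition rhom :: "(complex \<Rightarrow> 'a::ring \<Rightarrow> 'a) \<Rightarrow> 'a \<Rightarrow> ('m, 'a) amod \<Rightarrow> ('n, 'a) amod \<Rightarrow> ('m \<Rightarrow> 'n) \<Rightarrow> bool" where
  "rhom smul e M N f \<longleftrightarrow>
     (\<forall>u\<in>mcarrier M. f u \<in> mcarrier N) \<and>
     (\<forall>u\<in>mcarrier M. \<forall>v\<in>mcarrier M. f (madd M u v) = madd N (f u) (f v)) \<and>
     (\<forall>c. \<forall>u\<in>mcarrier M. f (mscal M c u) = mscal N c (f u)) \<and>
     (\<forall>b\<in>corner e e. \<forall>u\<in>mcarrier M. f (mact M b u) = mact N b (f u))"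

definition Ae_right :: "(complex \<Rightarrow> 'a::ring \<Rightarrow> 'a) \<Rightarrow> 'a \<Rightarrow> ('a, 'a) amod" where
  "Ae_right smul e = \<lparr>mcarrier = lideal e, madd = (+), mzero = 0, mscal = smul,
                      mact = (\<lambda>b u. u * b)\<rparr>"

definition right_projective_wrt ::
  "(complex \<Rightarrow> 'a::ring \<Rightarrow> 'a) \<Rightarrow> 'a \<Rightarrow> ('m, 'a) amod \<Rightarrow> ('n, 'a) amod \<Rightarrow> ('p, 'a) amod \<Rightarrow> bool" where
  "right_projective_wrt smul e M N P \<longleftrightarrow>
     (\<forall>g f. rmod smul e N \<and> rmod smul e P \<and> rhom smul e N P g \<and> g ` mcarrier N = mcarrier P \<and>
        rhom smul e M P f \<longrightarrow>
        (\<exists>h. rhom smul e M N h \<and> (\<forall>u\<in>mcarrier M. g (h u) = f u)))"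

end

theory Submission
  imports Defs
begin


section \<open>Finite sums in abstract modules\<close>

definition msum :: "('m, 'b) amod \<Rightarrow> ('i \<Rightarrow> 'm) \<Rightarrow> 'i set \<Rightarrow> 'm" where
  "msum M g A = Finite_Set.fold
     (\<lambda>i acc. madd M (g i) (if acc \<in> mcarrier M then acc else mzero M)) (mzero M) A"

locale cvsl =
  fixes M :: "('m, 'b) amod"
  assumes cvs: "cvs M"
begin

abbreviation "C \<equiv> mcarrier M"
abbreviation "ad \<equiv> madd M"
abbreviation "z \<equiv> mzero M"
abbreviation "sc \<equiv> mscal M"

lemmas cvs_conj = cvs[unfolded cvs_def Let_def]

lemma z_in[simp]: "z \<in> C" using cvs_conj by meson
lemma add_in[simp]: "u \<in> C \<Longrightarrow> v \<in> C \<Longrightarrow> ad u v \<in> C" using cvs_conj by meson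
lemma sc_in[simp]: "u \<in> C \<Longrightarrow> sc c u \<in> C" using cvs_conj by meson
lemma assoc: "u \<in> C \<Longrightarrow> v \<in> C \<Longrightarrow> w \<in> C \<Longrightarrow> ad (ad u v) w = ad u (ad v w)"
  using cvs_conj by meson
lemma comm: "u \<in> C \<Longrightarrow> v \<in> C \<Longrightarrow> ad u v = ad v u"
  using cvs_conj by meson
lemma zero_l[simp]: "u \<in> C \<Longrightarrow> ad z u = u" using cvs_conj by meson
lemma zero_r[simp]: "u \<in> C \<Longrightarrow> ad u z = u" using comm zero_l z_in by metis
lemma inv_ex: "u \<in> C \<Longrightarrow> \<exists>v\<in>C. ad u v = z" using cvs_conj by meson
lemma sc_add: "u \<in> C \<Longrightarrow> v \<in> C \<Longrightarrow> sc c (ad u v) = ad (sc c u) (sc c v)"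
  using cvs_conj by meson
lemma add_sc: "u \<in> C \<Longrightarrow> sc (c + d) u = ad (sc c u) (sc d u)"
  using cvs_conj by meson
lemma sc_sc: "u \<in> C \<Longrightarrow> sc c (sc d u) = sc (c * d) u"
  using cvs_conj by meson
lemma sc_one: "u \<in> C \<Longrightarrow> sc 1 u = u"
  using cvs_conj by meson

lemma cancel_self: assumes "u \<in> C" "ad u u = u" shows "u = z"
proof -
  obtain v where v: "v \<in> C" "ad u v = z" using inv_ex assms by blast
  have "ad (ad u u) v = ad u (ad u v)" using assoc assms v by blast
  then show ?thesis using assms v by simp
qed

lemma swap4: "a \<in> C \<Longrightarrow> b \<in> C \<Longrightarrow> c \<in> C \<Longrightarrow> d \<in> C \<Longrightarrow>
   ad (ad a b) (ad c d) = ad (ad a c) (ad b d)"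
  by (metis add_in assoc comm)

lemma left_comm: "a \<in> C \<Longrightarrow> b \<in> C \<Longrightarrow> c \<in> C \<Longrightarrow> ad a (ad b c) = ad b (ad a c)"
  by (metis assoc comm)

lemma cfc: "comp_fun_commute_on {i. g i \<in> C}
   (\<lambda>i acc. ad (g i) (if acc \<in> C then acc else z))"
  by standard (auto simp: fun_eq_iff left_comm)

lemma msum_empty[simp]: "msum M g {} = z"
  by (simp add: msum_def)

lemma msum_insert_raw: "finite A \<Longrightarrow> x \<notin> A \<Longrightarrow> g x \<in> C \<Longrightarrow> (\<forall>i\<in>A. g i \<in> C) \<Longrightarrow>
   msum M g (insert x A) = ad (g x) (if msum M g A \<in> C then msum M g A else z)"
  unfolding msum_def by (rule comp_fun_commute_on.fold_insert[OF cfc]) auto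

lemma msum_in_aux: "finite A \<Longrightarrow> (\<forall>i\<in>A. g i \<in> C) \<Longrightarrow> msum M g A \<in> C"
proof (induction A rule: finite_induct)
  case empty then show ?case by simp
next
  case (insert x F)
  then show ?case using msum_insert_raw[of F x g] by auto
qed

lemma msum_in[simp]: "(\<forall>i\<in>A. g i \<in> C) \<Longrightarrow> msum M g A \<in> C"
  using msum_in_aux[of A g] by (cases "finite A") (auto simp: msum_def)

lemma msum_insert: "finite A \<Longrightarrow> x \<notin> A \<Longrightarrow> g x \<in> C \<Longrightarrow> (\<forall>i\<in>A. g i \<in> C) \<Longrightarrow>
   msum M g (insert x A) = ad (g x) (msum M g A)"
  using msum_insert_raw[of A x g] msum_in[of A g] by auto

lemma msum_cong: "finite A \<Longrightarrow> (\<forall>i\<in>A. g i \<in> C) \<Longrightarrow> (\<forall>i\<in>A. g i = k i) \<Longrightarrow>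
   msum M g A = msum M k A"
proof (induction A rule: finite_induct)
  case empty then show ?case by simp
next
  case (insert x F)
  then show ?case using msum_insert[of F x g] msum_insert[of F x k] by auto
qed

lemma msum_add: "finite A \<Longrightarrow> (\<forall>i\<in>A. g i \<in> C) \<Longrightarrow> (\<forall>i\<in>A. k i \<in> C) \<Longrightarrow>
   msum M (\<lambda>i. ad (g i) (k i)) A = ad (msum M g A) (msum M k A)"
proof (induction A rule: finite_induct)
  case empty then show ?case by simp
next
  case (insert x F)
  then show ?case using msum_insert[of F x g] msum_insert[of F x k]
      msum_insert[of F x "\<lambda>i. ad (g i) (k i)"] swap4 by auto
qed

lemma msum_zero_ext: "finite D \<Longrightarrow> (\<forall>i\<in>A. g i \<in> C) \<Longrightarrow> finite A \<Longrightarrow> (\<forall>i\<in>D. g i = z) \<Longrightarrow>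
   msum M g (A \<union> D) = msum M g A"
proof (induction D rule: finite_induct)
  case empty then show ?case by simp
next
  case (insert x F)
  show ?case
  proof (cases "x \<in> A \<union> F")
    case True
    then have "A \<union> insert x F = A \<union> F" by auto
    then show ?thesis using insert by auto
  next
    case False
    have "msum M g (A \<union> insert x F) = msum M g (insert x (A \<union> F))" by simp
    also have "\<dots> = ad (g x) (msum M g (A \<union> F))"
      using False insert by (intro msum_insert) auto
    finally show ?thesis using insert by auto
  qed
qed

lemma msum_superset: "finite B \<Longrightarrow> A \<subseteq> B \<Longrightarrow> (\<forall>i\<in>A. g i \<in> C) \<Longrightarrow> (\<forall>i\<in>B - A. g i = z) \<Longrightarrow>
   msum M g B = msum M g A"
  using msum_zero_ext[of "B - A" A g] finite_subset[of A B]
  by (metis Diff_partition finite_Diff)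

end

lemma msum_hom:
  assumes M: "cvs M" and M': "cvs M'"
    and cl: "\<forall>u\<in>mcarrier M. \<phi> u \<in> mcarrier M'"
    and ad: "\<forall>u\<in>mcarrier M. \<forall>v\<in>mcarrier M. \<phi> (madd M u v) = madd M' (\<phi> u) (\<phi> v)"
    and fin: "finite A" and gin: "\<forall>i\<in>A. g i \<in> mcarrier M"
  shows "\<phi> (msum M g A) = msum M' (\<lambda>i. \<phi> (g i)) A"
proof -
  interpret m: cvsl M by (rule cvsl.intro[OF M])
  interpret m': cvsl M' by (rule cvsl.intro[OF M'])
  have z: "\<phi> (mzero M) = mzero M'"
  proof -
    have "\<phi> (mzero M) = madd M' (\<phi> (mzero M)) (\<phi> (mzero M))"
      using ad m.z_in by (metis m.zero_l)
    then show ?thesis using m'.cancel_self cl m.z_in by metis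
  qed
  show ?thesis using fin gin
  proof (induction A rule: finite_induct)
    case empty then show ?case by (simp add: z)
  next
    case (insert x F)
    then show ?case using m.msum_insert[of F x g] m'.msum_insert[of F x "\<lambda>i. \<phi> (g i)"]
      ad cl m.msum_in by auto
  qed
qed




locale calgl =
  fixes smul :: "complex \<Rightarrow> 'a::ring \<Rightarrow> 'a"
  assumes calg: "calg smul"
begin

sublocale vs: vector_space smul using calg unfolding calg_def by auto

lemma ml: "smul c x * y = smul c (x * y)" using calg unfolding calg_def by auto
lemma mr: "x * smul c y = smul c (x * y)" using calg unfolding calg_def by metis

lemma auf_left:
  assumes orth: "\<forall>e\<in>E. \<forall>f\<in>E. e \<noteq> f \<longrightarrow> e * f = 0"
    and idem: "\<forall>e\<in>E. e * e = e"
    and sp: "UNIV \<subseteq> vs.span (\<Union>e\<in>E. \<Union>f\<in>E. corner e f)"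
  shows "finite {f\<in>E. f * x \<noteq> 0} \<and> (\<Sum>f\<in>{f\<in>E. f * x \<noteq> 0}. f * x) = x \<and>
         finite {f\<in>E. x * f \<noteq> 0}"
proof -
  have "x \<in> vs.span (\<Union>e\<in>E. \<Union>f\<in>E. corner e f)" using sp by auto
  then obtain t r where t: "finite t" "t \<subseteq> (\<Union>e\<in>E. \<Union>f\<in>E. corner e f)"
    and x: "x = (\<Sum>a\<in>t. smul (r a) a)"
    unfolding vs.span_explicit by blast
  have "\<forall>a\<in>t. \<exists>l. l \<in> E \<and> (\<exists>q y. q \<in> E \<and> a = l * y * q)"
    using t(2) unfolding corner_def by blast
  then obtain lf where lf: "\<forall>a\<in>t. lf a \<in> E \<and> (\<exists>q y. q \<in> E \<and> a = lf a * y * q)"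
    by metis
  then obtain rf where rf: "\<forall>a\<in>t. rf a \<in> E \<and> (\<exists>y. a = lf a * y * rf a)"
    by metis
  then obtain ym where ym: "\<forall>a\<in>t. a = lf a * ym a * rf a"
    by metis
  have l0: "f * a = 0" if "f \<in> E" "a \<in> t" "f \<noteq> lf a" for f a
  proof -
    have "f * (lf a * ym a * rf a) = (f * lf a) * ym a * rf a" by (simp add: mult.assoc)
    then have "f * a = (f * lf a) * ym a * rf a" using ym that(2) by metis
    then show ?thesis using orth that lf by auto
  qed
  have r0: "a * f = 0" if "f \<in> E" "a \<in> t" "f \<noteq> rf a" for f a
  proof -
    have "(lf a * ym a * rf a) * f = lf a * ym a * (rf a * f)" by (simp add: mult.assoc)
    then have "a * f = lf a * ym a * (rf a * f)" using ym that(2) by metis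
    then show ?thesis using orth that rf by auto
  qed
  have lid: "lf a * a = a" if "a \<in> t" for a
  proof -
    have "lf a * (lf a * ym a * rf a) = (lf a * lf a) * ym a * rf a" by (simp add: mult.assoc)
    then have "lf a * a = (lf a * lf a) * ym a * rf a" using ym that by metis
    then show ?thesis using idem lf that ym by metis
  qed
  have fx: "f * x = (\<Sum>a\<in>t. smul (r a) (f * a))" for f
    unfolding x by (simp add: sum_distrib_left mr)
  have xf: "x * f = (\<Sum>a\<in>t. smul (r a) (a * f))" for f
    unfolding x by (simp add: sum_distrib_right ml)
  have sub1: "{f\<in>E. f * x \<noteq> 0} \<subseteq> lf ` t"
  proof
    fix f assume f: "f \<in> {f\<in>E. f * x \<noteq> 0}"
    show "f \<in> lf ` t"
    proof (rule ccontr)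
      assume "f \<notin> lf ` t"
      then have "\<forall>a\<in>t. f * a = 0" using l0 f by auto
      then have "f * x = 0" unfolding fx by simp
      then show False using f by auto
    qed
  qed
  have sub2: "{f\<in>E. x * f \<noteq> 0} \<subseteq> rf ` t"
  proof
    fix f assume f: "f \<in> {f\<in>E. x * f \<noteq> 0}"
    show "f \<in> rf ` t"
    proof (rule ccontr)
      assume "f \<notin> rf ` t"
      then have "\<forall>a\<in>t. a * f = 0" using r0 f by auto
      then have "x * f = 0" unfolding xf by simp
      then show False using f by auto
    qed
  qed
  have fin1: "finite {f\<in>E. f * x \<noteq> 0}" using sub1 t(1) finite_subset by blast
  have fin2: "finite {f\<in>E. x * f \<noteq> 0}" using sub2 t(1) finite_subset by blast
  have GE: "lf ` t \<subseteq> E" using lf by auto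
  have inner: "(\<Sum>f\<in>lf ` t. f * a) = a" if a: "a \<in> t" for a
  proof -
    have "(\<Sum>f\<in>lf ` t. f * a) = lf a * a + (\<Sum>f\<in>lf ` t - {lf a}. f * a)"
      using a t(1) by (intro sum.remove) auto
    also have "(\<Sum>f\<in>lf ` t - {lf a}. f * a) = 0"
      using GE l0 a by (intro sum.neutral) auto
    finally show ?thesis using lid a by simp
  qed
  have "(\<Sum>f\<in>{f\<in>E. f * x \<noteq> 0}. f * x) = (\<Sum>f\<in>lf ` t. f * x)"
    using sub1 t(1) GE by (intro sum.mono_neutral_left) auto
  also have "\<dots> = (\<Sum>f\<in>lf ` t. \<Sum>a\<in>t. smul (r a) (f * a))" by (simp add: fx)
  also have "\<dots> = (\<Sum>a\<in>t. \<Sum>f\<in>lf ` t. smul (r a) (f * a))" by (rule sum.swap)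
  also have "\<dots> = (\<Sum>a\<in>t. smul (r a) (\<Sum>f\<in>lf ` t. f * a))" by (simp add: vs.scale_sum_right)
  also have "\<dots> = x" unfolding x by (intro sum.cong) (auto simp: inner)
  finally show ?thesis using fin1 fin2 by blast
qed

end



definition coset :: "'a::ring set \<Rightarrow> 'a \<Rightarrow> 'a set" where
  "coset N u = {u + n | n. n \<in> N}"

definition QM :: "(complex \<Rightarrow> 'a::ring \<Rightarrow> 'a) \<Rightarrow> 'a set \<Rightarrow> 'a \<Rightarrow> ('a set, 'a) amod" where
  "QM smul N f = \<lparr>mcarrier = {coset N u | u. u \<in> lideal f},
     madd = (\<lambda>X Y. {x + y + n | x y n. x \<in> X \<and> y \<in> Y \<and> n \<in> N}),
     mzero = N,
     mscal = (\<lambda>c X. {smul c x + n | x n. x \<in> X \<and> n \<in> N}),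
     mact = (\<lambda>a X. {a * x + n | x n. x \<in> X \<and> n \<in> N})\<rparr>"

context calgl
begin

definition lsub :: "'a set \<Rightarrow> 'a \<Rightarrow> bool" where
  "lsub N f \<longleftrightarrow> vs.subspace N \<and> N \<subseteq> lideal f \<and> (\<forall>a. \<forall>n\<in>N. a * n \<in> N)"

lemma lideal_0[simp]: "0 \<in> lideal f" unfolding lideal_def by (auto intro: exI[of _ 0])
lemma lideal_add[simp]: "u \<in> lideal f \<Longrightarrow> v \<in> lideal f \<Longrightarrow> u + v \<in> lideal f"
  unfolding lideal_def by (auto simp: distrib_right[symmetric])
lemma lideal_sc[simp]: "u \<in> lideal f \<Longrightarrow> smul c u \<in> lideal f"
  unfolding lideal_def by (auto simp: ml[symmetric])
lemma lideal_mult[simp]: "u \<in> lideal f \<Longrightarrow> a * u \<in> lideal f"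
  unfolding lideal_def by (auto simp: mult.assoc[symmetric])
lemma lideal_uminus[simp]: "u \<in> lideal f \<Longrightarrow> - u \<in> lideal f"
proof -
  assume "u \<in> lideal f"
  then obtain x where "u = x * f" unfolding lideal_def by auto
  then have "- u = (- x) * f" by simp
  then show ?thesis unfolding lideal_def by blast
qed
lemma lideal_self: "f * f = f \<Longrightarrow> f \<in> lideal f"
  unfolding lideal_def by (metis (mono_tags, lifting) mem_Collect_eq)
lemma subspace_lideal: "vs.subspace (lideal f)"
  by (simp add: vs.subspace_def)

context
  fixes N :: "'a set" and f :: 'a
  assumes sN: "vs.subspace N"
begin

lemma N0[simp]: "0 \<in> N" using sN vs.subspace_0 by blast
lemma Nadd[simp]: "x \<in> N \<Longrightarrow> y \<in> N \<Longrightarrow> x + y \<in> N" using sN vs.subspace_add by blast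
lemma Nsc[simp]: "x \<in> N \<Longrightarrow> smul c x \<in> N" using sN vs.subspace_scale by blast
lemma Nneg[simp]: "x \<in> N \<Longrightarrow> - x \<in> N" using sN vs.subspace_neg by blast
lemma Ndiff[simp]: "x \<in> N \<Longrightarrow> y \<in> N \<Longrightarrow> x - y \<in> N" using sN vs.subspace_diff by blast

lemma coset_self: "u \<in> coset N u"
  unfolding coset_def by (auto intro: exI[of _ 0])

lemma coset_eq: "coset N u = coset N v \<longleftrightarrow> u - v \<in> N"
proof
  assume "coset N u = coset N v"
  then have "u \<in> coset N v" using coset_self by auto
  then obtain n where "n \<in> N" "u = v + n" unfolding coset_def by auto
  then show "u - v \<in> N" by simp
next
  assume d: "u - v \<in> N"
  have "coset N u \<subseteq> coset N v" if "u - v \<in> N" for u v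
  proof
    fix x assume "x \<in> coset N u"
    then obtain n where n: "n \<in> N" "x = u + n" unfolding coset_def by auto
    then have "x = v + ((u - v) + n)" by (simp add: algebra_simps)
    moreover have "(u - v) + n \<in> N" using n that by simp
    ultimately show "x \<in> coset N v" unfolding coset_def by blast
  qed
  moreover have "v - u \<in> N" using Nneg[OF d] by simp
  ultimately show "coset N u = coset N v" using d by blast
qed

lemma coset_0: "coset N 0 = N" unfolding coset_def by auto

lemma in_QM: "X \<in> mcarrier (QM smul N f) \<longleftrightarrow> (\<exists>u\<in>lideal f. X = coset N u)"
  unfolding QM_def by auto

lemma QM_E[elim!]: "X \<in> mcarrier (QM smul N f) \<Longrightarrow> (\<And>u. u \<in> lideal f \<Longrightarrow> X = coset N u \<Longrightarrow> P) \<Longrightarrow> P"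
  unfolding in_QM by blast

lemma coset_in_QM[simp]: "u \<in> lideal f \<Longrightarrow> coset N u \<in> mcarrier (QM smul N f)"
  unfolding in_QM by blast

lemma zero_QM: "mzero (QM smul N f) = coset N 0" unfolding QM_def by (simp add: coset_0)

lemma add_QM[simp]: "madd (QM smul N f) (coset N u) (coset N v) = coset N (u + v)"
proof -
  have "{x + y + n | x y n. x \<in> coset N u \<and> y \<in> coset N v \<and> n \<in> N} = coset N (u + v)"
  proof (intro set_eqI iffI)
    fix w assume "w \<in> {x + y + n | x y n. x \<in> coset N u \<and> y \<in> coset N v \<and> n \<in> N}"
    then obtain n1 n2 n where "n1 \<in> N" "n2 \<in> N" "n \<in> N" "w = (u + n1) + (v + n2) + n"
      unfolding coset_def by auto
    moreover have "(u + n1) + (v + n2) + n = (u + v) + (n1 + n2 + n)" by (simp add: algebra_simps)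
    ultimately show "w \<in> coset N (u + v)" unfolding coset_def by auto
  next
    fix w assume "w \<in> coset N (u + v)"
    then obtain n where "n \<in> N" "w = u + v + n" unfolding coset_def by auto
    then show "w \<in> {x + y + n | x y n. x \<in> coset N u \<and> y \<in> coset N v \<and> n \<in> N}"
      using coset_self by blast
  qed
  then show ?thesis unfolding QM_def by simp
qed

lemma sc_QM[simp]: "mscal (QM smul N f) c (coset N u) = coset N (smul c u)"
proof -
  have "{smul c x + n | x n. x \<in> coset N u \<and> n \<in> N} = coset N (smul c u)"
  proof (intro set_eqI iffI)
    fix w assume "w \<in> {smul c x + n | x n. x \<in> coset N u \<and> n \<in> N}"
    then obtain n1 n where "n1 \<in> N" "n \<in> N" "w = smul c (u + n1) + n"
      unfolding coset_def by auto
    moreover have "smul c (u + n1) + n = smul c u + (smul c n1 + n)"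
      by (simp add: algebra_simps)
    ultimately show "w \<in> coset N (smul c u)" unfolding coset_def by auto
  next
    fix w assume "w \<in> coset N (smul c u)"
    then obtain n where "n \<in> N" "w = smul c u + n" unfolding coset_def by auto
    then show "w \<in> {smul c x + n | x n. x \<in> coset N u \<and> n \<in> N}"
      using coset_self by blast
  qed
  then show ?thesis unfolding QM_def by simp
qed

end

lemma act_QM[simp]:
  assumes "lsub N f"
  shows "mact (QM smul N f) a (coset N u) = coset N (a * u)"
proof -
  have sN: "vs.subspace N" and li: "\<forall>a. \<forall>n\<in>N. a * n \<in> N" using assms unfolding lsub_def by auto
  have "{a * x + n | x n. x \<in> coset N u \<and> n \<in> N} = coset N (a * u)"
  proof (intro set_eqI iffI)
    fix w assume "w \<in> {a * x + n | x n. x \<in> coset N u \<and> n \<in> N}"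
    then obtain n1 n where "n1 \<in> N" "n \<in> N" "w = a * (u + n1) + n"
      unfolding coset_def by auto
    moreover have "a * (u + n1) + n = a * u + (a * n1 + n)"
      by (simp add: algebra_simps)
    ultimately show "w \<in> coset N (a * u)" unfolding coset_def using li Nadd[OF sN] by auto
  next
    fix w assume "w \<in> coset N (a * u)"
    then obtain n where "n \<in> N" "w = a * u + n" unfolding coset_def by auto
    then show "w \<in> {a * x + n | x n. x \<in> coset N u \<and> n \<in> N}"
      using coset_self[OF sN] by blast
  qed
  then show ?thesis unfolding QM_def by simp
qed

end



context calgl
begin

lemma lsub_sub: "lsub N f \<Longrightarrow> vs.subspace N" unfolding lsub_def by auto

lemma cvs_QM:
  assumes L: "lsub N f"
  shows "cvs (QM smul N f)"
proof -
  have sN: "vs.subspace N" using L lsub_sub by auto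
  note simps = coset_in_QM[OF sN] zero_QM[OF sN] add_QM[OF sN] sc_QM[OF sN]
  have inv: "\<exists>v\<in>mcarrier (QM smul N f). madd (QM smul N f) X v = mzero (QM smul N f)"
    if X: "X \<in> mcarrier (QM smul N f)" for X
  proof -
    obtain u where u: "u \<in> lideal f" "X = coset N u" by (rule QM_E[OF sN X])
    have "coset N (- u) \<in> mcarrier (QM smul N f)" using u by (simp add: simps)
    moreover have "madd (QM smul N f) X (coset N (- u)) = mzero (QM smul N f)"
      using u by (simp add: simps)
    ultimately show ?thesis by blast
  qed
  show ?thesis
    unfolding cvs_def Let_def
    apply (intro conjI)
    using inv by (auto simp: simps algebra_simps elim!: QM_E[OF sN])
qed

lemma lmod_QM:
  assumes L: "lsub N f"
  shows "lmod smul (QM smul N f)"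
proof -
  have sN: "vs.subspace N" using L lsub_sub by auto
  note simps = coset_in_QM[OF sN] zero_QM[OF sN] add_QM[OF sN] sc_QM[OF sN] act_QM[OF L]
  let ?M = "QM smul N f"
  have a1: "\<forall>x. \<forall>u\<in>mcarrier ?M. mact ?M x u \<in> mcarrier ?M"
    by (auto simp: simps elim!: QM_E[OF sN])
  have a2: "\<forall>x. \<forall>u\<in>mcarrier ?M. \<forall>v\<in>mcarrier ?M. mact ?M x (madd ?M u v) = madd ?M (mact ?M x u) (mact ?M x v)"
    by (auto simp: simps distrib_left elim!: QM_E[OF sN])
  have a3: "\<forall>x y. \<forall>u\<in>mcarrier ?M. mact ?M (x + y) u = madd ?M (mact ?M x u) (mact ?M y u)"
    by (auto simp: simps distrib_right elim!: QM_E[OF sN])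
  have a4: "\<forall>c x. \<forall>u\<in>mcarrier ?M. mact ?M (smul c x) u = mscal ?M c (mact ?M x u)"
    by (auto simp: simps ml elim!: QM_E[OF sN])
  have a5: "\<forall>c x. \<forall>u\<in>mcarrier ?M. mact ?M x (mscal ?M c u) = mscal ?M c (mact ?M x u)"
    by (auto simp: simps mr elim!: QM_E[OF sN])
  have a6: "\<forall>x y. \<forall>u\<in>mcarrier ?M. mact ?M (x * y) u = mact ?M x (mact ?M y u)"
    by (auto simp: simps mult.assoc elim!: QM_E[OF sN])
  show ?thesis
    unfolding lmod_def Let_def by (intro conjI cvs_QM[OF L] a1 a2 a3 a4 a5 a6)
qed

lemma mzero_QM: "mzero (QM smul N f) = N" unfolding QM_def by simp

lemma qc_QM:
  assumes L: "lsub N f" and qc: "\<forall>u::'a. \<exists>x. x * u = u"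
  shows "quasicoherent (QM smul N f)"
  unfolding quasicoherent_def
proof
  have sN: "vs.subspace N" using L lsub_sub by auto
  fix X assume X: "X \<in> mcarrier (QM smul N f)"
  obtain u where u: "u \<in> lideal f" "X = coset N u" by (rule QM_E[OF sN X])
  obtain x where "x * u = u" using qc by blast
  then have "mact (QM smul N f) x X = X" using u act_QM[OF L] by simp
  then show "\<exists>x. mact (QM smul N f) x X = X" by blast
qed

lemma irr_QM:
  assumes L: "lsub N f" and ff: "f * f = f" and fN: "f \<notin> N"
    and maxl: "\<forall>N'. lsub N' f \<and> f \<notin> N' \<and> N \<subseteq> N' \<longrightarrow> N' = N"
  shows "irreducible_mod (QM smul N f)"
proof -
  have sN: "vs.subspace N" using L lsub_sub by auto
  let ?M = "QM smul N f"
  have fl: "f \<in> lideal f" using lideal_self ff by auto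
  have c0: "coset N 0 = N" using coset_0[OF sN] .
  have cf: "coset N f \<in> mcarrier ?M" using coset_in_QM[OF sN fl] .
  have cfN: "coset N f \<noteq> N" using coset_self[OF sN, of f] fN by auto
  have ne: "mcarrier ?M \<noteq> {mzero ?M}" using cf cfN mzero_QM by auto
  have sub: "S = {mzero ?M} \<or> S = mcarrier ?M" if S: "lsubmod ?M S" for S
  proof -
    have SC: "S \<subseteq> mcarrier ?M" and S0: "N \<in> S"
      and Sadd: "\<forall>X\<in>S. \<forall>Y\<in>S. madd ?M X Y \<in> S"
      and Ssc: "\<forall>c. \<forall>X\<in>S. mscal ?M c X \<in> S"
      and Sact: "\<forall>a. \<forall>X\<in>S. mact ?M a X \<in> S"
      using S unfolding lsubmod_def mzero_QM by auto
    define N' where "N' = {u \<in> lideal f. coset N u \<in> S}"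
    show ?thesis
    proof (cases "f \<in> N'")
      case True
      have "mcarrier ?M \<subseteq> S"
      proof
        fix X assume X: "X \<in> mcarrier ?M"
        obtain u where u: "u \<in> lideal f" "X = coset N u" by (rule QM_E[OF sN X])
        obtain a where a: "u = a * f" using u unfolding lideal_def by auto
        have "X = mact ?M a (coset N f)" using u a act_QM[OF L] by simp
        then show "X \<in> S" using Sact True unfolding N'_def by auto
      qed
      then show ?thesis using SC by auto
    next
      case False
      have ls: "lsub N' f"
        unfolding lsub_def vs.subspace_def
      proof (intro conjI allI ballI)
        show "0 \<in> N'" unfolding N'_def using c0 S0 by simp
        fix x y assume "x \<in> N'" "y \<in> N'"
        then show "x + y \<in> N'" unfolding N'_def using Sadd add_QM[OF sN] by fastforce
      next
        fix c x assume "x \<in> N'"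
        then show "smul c x \<in> N'" unfolding N'_def using Ssc sc_QM[OF sN] by fastforce
      next
        show "N' \<subseteq> lideal f" unfolding N'_def by auto
      next
        fix a n assume "n \<in> N'"
        then show "a * n \<in> N'" unfolding N'_def using Sact act_QM[OF L] by fastforce
      qed
      have "N \<subseteq> N'"
      proof
        fix n assume n: "n \<in> N"
        then have "n \<in> lideal f" using L unfolding lsub_def by auto
        moreover have "coset N n = coset N 0" using coset_eq[OF sN] n by simp
        ultimately show "n \<in> N'" unfolding N'_def using c0 S0 by simp
      qed
      then have NN: "N' = N" using maxl ls False by blast
      have "S \<subseteq> {N}"
      proof
        fix X assume XS: "X \<in> S"
        then have X: "X \<in> mcarrier ?M" using SC by auto
        obtain u where u: "u \<in> lideal f" "X = coset N u" by (rule QM_E[OF sN X])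
        then have "u \<in> N" using XS NN unfolding N'_def by auto
        then have "coset N u = coset N 0" using coset_eq[OF sN] by simp
        then show "X \<in> {N}" using u c0 by simp
      qed
      then show ?thesis using S0 mzero_QM by auto
    qed
  qed
  show ?thesis unfolding irreducible_mod_def using ne sub by blast
qed

lemma key:
  assumes gen: "generating smul e" and ff: "f * f = f" and qc: "\<forall>u::'a. \<exists>x. x * u = u"
  shows "f \<in> vs.span {x * e * y * f | x y. True}"
proof (rule ccontr)
  assume nf: "f \<notin> vs.span {x * e * y * f | x y. True}"
  define G where "G = {x * e * y * f | x y. True}"
  define L0 where "L0 = vs.span G"
  have ee: "e * e = e" using gen unfolding generating_def by auto
  have GL: "G \<subseteq> lideal f" unfolding G_def lideal_def by blast
  have L0l: "L0 \<subseteq> lideal f" unfolding L0_def by (rule vs.span_minimal[OF GL subspace_lideal])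
  have L0left: "a * v \<in> L0" if "v \<in> L0" for a v
  proof -
    have "v \<in> vs.span G" using that L0_def by simp
    then show ?thesis
    proof (induction rule: vs.span_induct)
      case base
      show ?case unfolding vs.subspace_def L0_def
        by (auto simp: distrib_left mr vs.span_zero vs.span_add vs.span_scale)
    next
      case (step x)
      then obtain p q where "x = p * e * q * f" unfolding G_def by auto
      then have "a * x = (a * p) * e * q * f" by (simp add: mult.assoc)
      then have "a * x \<in> G" unfolding G_def by blast
      then show ?case unfolding L0_def by (rule vs.span_base)
    qed
  qed
  have lsL0: "lsub L0 f" unfolding lsub_def L0_def using L0l L0left L0_def by auto
  define \<A> where "\<A> = {N. lsub N f \<and> f \<notin> N \<and> L0 \<subseteq> N}"
  have ne: "\<A> \<noteq> {}" using lsL0 nf unfolding \<A>_def L0_def G_def by blast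
  have ch: "\<Union>\<C> \<in> \<A>" if C: "\<C> \<noteq> {}" "subset.chain \<A> \<C>" for \<C>
  proof -
    have CA: "\<C> \<subseteq> \<A>" and tot: "\<forall>X\<in>\<C>. \<forall>Y\<in>\<C>. X \<subseteq> Y \<or> Y \<subseteq> X"
      using C(2) unfolding subset_chain_def by auto
    obtain X0 where X0: "X0 \<in> \<C>" using C(1) by auto
    have mem: "lsub X f" "f \<notin> X" "L0 \<subseteq> X" if "X \<in> \<C>" for X
      using that CA unfolding \<A>_def by auto
    have sub: "vs.subspace X" if "X \<in> \<C>" for X using mem(1)[OF that] lsub_sub by auto
    have "vs.subspace (\<Union>\<C>)"
      unfolding vs.subspace_def
    proof (intro conjI ballI allI)
      have "0 \<in> X0" using vs.subspace_0[OF sub[OF X0]] .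
      then show "0 \<in> \<Union>\<C>" using X0 by blast
    next
      fix x y assume "x \<in> \<Union>\<C>" "y \<in> \<Union>\<C>"
      then obtain X Y where XY: "X \<in> \<C>" "Y \<in> \<C>" "x \<in> X" "y \<in> Y" by auto
      show "x + y \<in> \<Union>\<C>"
      proof (cases "X \<subseteq> Y")
        case True
        then have "x + y \<in> Y" using XY vs.subspace_add[OF sub[OF XY(2)]] by blast
        then show ?thesis using XY by blast
      next
        case False
        then have "Y \<subseteq> X" using tot XY by blast
        then have "x + y \<in> X" using XY vs.subspace_add[OF sub[OF XY(1)]] by blast
        then show ?thesis using XY by blast
      qed
    next
      fix c x assume "x \<in> \<Union>\<C>"
      then obtain X where X: "X \<in> \<C>" "x \<in> X" by auto
      then have "smul c x \<in> X" using vs.subspace_scale[OF sub[OF X(1)]] by blast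
      then show "smul c x \<in> \<Union>\<C>" using X by blast
    qed
    moreover have "\<Union>\<C> \<subseteq> lideal f" using mem(1) unfolding lsub_def by blast
    moreover have "\<forall>a. \<forall>n\<in>\<Union>\<C>. a * n \<in> \<Union>\<C>" using mem(1) unfolding lsub_def by blast
    moreover have "f \<notin> \<Union>\<C>" using mem(2) by blast
    moreover have "L0 \<subseteq> \<Union>\<C>" using mem(3) X0 by blast
    ultimately show ?thesis unfolding \<A>_def lsub_def by blast
  qed
  obtain N where N: "N \<in> \<A>" and maxN: "\<forall>X\<in>\<A>. N \<subseteq> X \<longrightarrow> X = N"
    using subset_Zorn_nonempty[OF ne ch] by blast
  have L: "lsub N f" and fN: "f \<notin> N" and L0N: "L0 \<subseteq> N" using N unfolding \<A>_def by auto
  have sN: "vs.subspace N" using L lsub_sub by auto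
  have maxl: "\<forall>N'. lsub N' f \<and> f \<notin> N' \<and> N \<subseteq> N' \<longrightarrow> N' = N"
    using maxN L0N unfolding \<A>_def by blast
  let ?M = "QM smul N f"
  have lm: "lmod smul ?M" by (rule lmod_QM[OF L])
  have qm: "quasicoherent ?M" by (rule qc_QM[OF L qc])
  have im: "irreducible_mod ?M" by (rule irr_QM[OF L ff fN maxl])
  obtain h where h: "lhom_from_Ae smul e ?M h" and himg: "h ` lideal e = mcarrier ?M"
    using gen lm qm im unfolding generating_def by blast
  have el: "e \<in> lideal e" using lideal_self ee by auto
  have hc: "h e \<in> mcarrier ?M" using h el unfolding lhom_from_Ae_def by auto
  obtain u where u: "u \<in> lideal f" "h e = coset N u" by (rule QM_E[OF sN hc])
  obtain a where a: "u = a * f" using u(1) unfolding lideal_def by auto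
  have "e * u = e * e * a * f" using a ee by (simp add: mult.assoc)
  then have "e * u \<in> G" unfolding G_def by blast
  then have euN: "e * u \<in> N" using L0N vs.span_base unfolding L0_def by blast
  have "h e = h (e * e)" using ee by simp
  also have "\<dots> = mact ?M e (h e)" using h el unfolding lhom_from_Ae_def by auto
  also have "\<dots> = coset N (e * u)" using u act_QM[OF L] by simp
  also have "\<dots> = coset N 0" using coset_eq[OF sN] euN by simp
  finally have he: "h e = coset N 0" .
  have "h v = N" if v: "v \<in> lideal e" for v
  proof -
    obtain w where w: "v = w * e" using v unfolding lideal_def by auto
    have "h v = mact ?M w (h e)" using h el w unfolding lhom_from_Ae_def by auto
    also have "\<dots> = coset N (w * 0)" using he act_QM[OF L] by simp
    finally show ?thesis using coset_0[OF sN] by simp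
  qed
  then have "mcarrier ?M \<subseteq> {N}" using himg by auto
  moreover have "coset N f \<in> mcarrier ?M" using coset_in_QM[OF sN] lideal_self ff by auto
  moreover have "coset N f \<noteq> N" using coset_self[OF sN, of f] fN by auto
  ultimately show False by auto
qed

end



lemma lcs_reindex:
  assumes "left_coord_system smul e S \<alpha> \<alpha>c"
  shows "left_coord_system smul e ((\<lambda>s. {s}) ` S) (\<lambda>i. \<alpha> (the_elem i)) (\<lambda>i. \<alpha>c (the_elem i))"
proof -
  have inj: "inj_on (\<lambda>s. {s}) A" for A :: "'b set" by (auto simp: inj_on_def)
  have img: "{i \<in> (\<lambda>s. {s}) ` S. P (the_elem i)} = (\<lambda>s. {s}) ` {s\<in>S. P s}" for P
    by auto
  have fin_iff: "finite {i \<in> (\<lambda>s. {s}) ` S. P (the_elem i)} = finite {s\<in>S. P s}" for P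
    by (simp only: img finite_image_iff[OF inj])
  have sum_eq: "(\<Sum>i\<in>{i \<in> (\<lambda>s. {s}) ` S. P (the_elem i)}. g (the_elem i)) = (\<Sum>s\<in>{s\<in>S. P s}. g s)"
    for P and g :: "'b \<Rightarrow> 'a"
    by (simp add: img sum.reindex[OF inj])
  have A: "\<forall>i\<in>S. rmap smul e (corner e e) (lideal e) (\<alpha> i)"
    "\<forall>i\<in>S. rmap smul e (lideal e) (corner e e) (\<alpha>c i)"
    "\<forall>\<xi>\<in>lideal e. finite {i\<in>S. \<alpha>c i \<xi> \<noteq> 0} \<and> (\<Sum>i\<in>{i\<in>S. \<alpha>c i \<xi> \<noteq> 0}. \<alpha> i (\<alpha>c i \<xi>)) = \<xi>"
    "\<forall>x. finite {i\<in>S. \<exists>b\<in>corner e e. x * \<alpha> i b \<noteq> 0} \<and> finite {i\<in>S. \<exists>\<xi>\<in>lideal e. \<alpha>c i (x * \<xi>) \<noteq> 0}"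
    using assms unfolding left_coord_system_def by auto
  show ?thesis
    unfolding left_coord_system_def
  proof (intro conjI ballI allI)
    show "\<And>i. i \<in> (\<lambda>s. {s}) ` S \<Longrightarrow> rmap smul e (corner e e) (lideal e) (\<alpha> (the_elem i))"
      using A(1) by auto
    show "\<And>i. i \<in> (\<lambda>s. {s}) ` S \<Longrightarrow> rmap smul e (lideal e) (corner e e) (\<alpha>c (the_elem i))"
      using A(2) by auto
  next
    fix \<xi> assume "\<xi> \<in> lideal e"
    then show "finite {i \<in> (\<lambda>s. {s}) ` S. \<alpha>c (the_elem i) \<xi> \<noteq> 0}"
      "(\<Sum>i\<in>{i \<in> (\<lambda>s. {s}) ` S. \<alpha>c (the_elem i) \<xi> \<noteq> 0}. \<alpha> (the_elem i) (\<alpha>c (the_elem i) \<xi>)) = \<xi>"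
      using A(3) fin_iff[of "\<lambda>s. \<alpha>c s \<xi> \<noteq> 0"]
        sum_eq[where P="\<lambda>s. \<alpha>c s \<xi> \<noteq> 0" and g="\<lambda>s. \<alpha> s (\<alpha>c s \<xi>)"] by auto
  next
    fix x
    show "finite {i \<in> (\<lambda>s. {s}) ` S. \<exists>b\<in>corner e e. x * \<alpha> (the_elem i) b \<noteq> 0}"
      using A(4) fin_iff[of "\<lambda>s. \<exists>b\<in>corner e e. x * \<alpha> s b \<noteq> 0"] by auto
    show "finite {i \<in> (\<lambda>s. {s}) ` S. \<exists>\<xi>\<in>lideal e. \<alpha>c (the_elem i) (x * \<xi>) \<noteq> 0}"
      using A(4) fin_iff[of "\<lambda>s. \<exists>\<xi>\<in>lideal e. \<alpha>c s (x * \<xi>) \<noteq> 0"] by auto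
  qed
qed

context calgl
begin

lemma coord_exists:
  assumes orth: "\<forall>e\<in>Es. \<forall>f\<in>Es. e \<noteq> f \<longrightarrow> e * f = 0"
    and idem: "\<forall>e\<in>Es. e * e = e"
    and sp: "UNIV \<subseteq> vs.span (\<Union>e\<in>Es. \<Union>f\<in>Es. corner e f)"
    and gen: "generating smul e"
  shows "\<exists>(S::'a set) \<alpha> \<alpha>c. left_coord_system smul e S \<alpha> \<alpha>c"
proof -
  note auf = auf_left[OF orth idem sp]
  have ee: "e * e = e" using gen unfolding generating_def by auto
  have qc: "\<forall>u::'a. \<exists>x. x * u = u"
  proof
    fix u :: 'a
    have "(\<Sum>f\<in>{f\<in>Es. f * u \<noteq> 0}. f) * u = u"
      using auf[of u] by (simp add: sum_distrib_right)
    then show "\<exists>x. x * u = u" by blast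
  qed
  have dec: "\<exists>F c. finite F \<and> F \<subseteq> {f * x * e * y * f | x y. True} - {0} \<and>
                   f = (\<Sum>s\<in>F. smul (c s) s)" if fE: "f \<in> Es" for f
  proof -
    have ff: "f * f = f" using idem fE by auto
    define G' where "G' = {f * x * e * y * f | x y. True}"
    have fsp: "f \<in> vs.span {x * e * y * f | x y. True}" by (rule key[OF gen ff qc])
    have "f * v \<in> vs.span G'" if "v \<in> vs.span {x * e * y * f | x y. True}" for v
      using that
    proof (induction rule: vs.span_induct)
      case base
      show ?case unfolding vs.subspace_def
        by (auto simp: distrib_left mr vs.span_zero vs.span_add vs.span_scale)
    next
      case (step v)
      then obtain p q where "v = p * e * q * f" by auto
      then have "f * v = f * p * e * q * f" by (simp add: mult.assoc)
      then have "f * v \<in> G'" unfolding G'_def by blast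
      then show ?case by (rule vs.span_base)
    qed
    then have "f * f \<in> vs.span G'" using fsp by blast
    then have "f \<in> vs.span G'" using ff by simp
    then obtain t r where t: "finite t" "t \<subseteq> G'" and fs: "f = (\<Sum>a\<in>t. smul (r a) a)"
      unfolding vs.span_explicit by blast
    have "(\<Sum>a\<in>t. smul (r a) a) = (\<Sum>a\<in>t - {0}. smul (r a) a)"
      using t(1) by (intro sum.mono_neutral_right) auto
    then show ?thesis using t fs unfolding G'_def
      by (intro exI[of _ "t - {0}"] exI[of _ r]) auto
  qed
  have d1: "\<forall>f\<in>Es. \<exists>F c. finite F \<and> F \<subseteq> {f * x * e * y * f | x y. True} - {0} \<and>
                   f = (\<Sum>s\<in>F. smul (c s) s)" using dec by blast
  from bchoice[OF d1] obtain Ff where d2: "\<forall>f\<in>Es. \<exists>c. finite (Ff f) \<and> Ff f \<subseteq> {f * x * e * y * f | x y. True} - {0} \<and>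
                   f = (\<Sum>s\<in>Ff f. smul (c s) s)" by blast
  from bchoice[OF d2] obtain Cf where FC: "\<forall>f\<in>Es. finite (Ff f) \<and> Ff f \<subseteq> {f * x * e * y * f | x y. True} - {0} \<and>
                   f = (\<Sum>s\<in>Ff f. smul (Cf f s) s)" by blast
  have Ffin: "finite (Ff f)" if "f \<in> Es" for f using FC that by auto
  have Fform: "\<exists>x y. s = f * x * e * y * f" if "f \<in> Es" "s \<in> Ff f" for f s
    using FC that by blast
  have Fnz: "s \<noteq> 0" if "f \<in> Es" "s \<in> Ff f" for f s using FC that by blast
  have Fsum: "f = (\<Sum>s\<in>Ff f. smul (Cf f s) s)" if "f \<in> Es" for f using FC that by auto
  have fs: "f * s = s" if fs0: "f \<in> Es" "s \<in> Ff f" for f s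
  proof -
    obtain x y where s: "s = f * x * e * y * f" using Fform[OF fs0] by blast
    have "f * (f * x * e * y * f) = (f * f) * x * e * y * f" by (simp add: mult.assoc)
    then show ?thesis using s idem fs0(1) by simp
  qed
  have uniq: "f = f'" if "f \<in> Es" "f' \<in> Es" "s \<in> Ff f" "s \<in> Ff f'" for f f' s
  proof (rule ccontr)
    assume ne: "f \<noteq> f'"
    have "s = f * (f' * s)" using fs that by simp
    also have "\<dots> = (f * f') * s" by (simp add: mult.assoc)
    also have "\<dots> = 0" using orth that ne by simp
    finally show False using Fnz that by blast
  qed
  define S where "S = (\<Union>f\<in>Es. Ff f)"
  have c1: "\<forall>s\<in>S. \<exists>f. f \<in> Es \<and> s \<in> Ff f \<and> (\<exists>x y. s = f * x * e * y * f)"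
    unfolding S_def using Fform by blast
  from bchoice[OF c1] obtain fo where fo: "\<forall>s\<in>S. fo s \<in> Es \<and> s \<in> Ff (fo s) \<and> (\<exists>x y. s = fo s * x * e * y * fo s)"
    by blast
  have c2: "\<forall>s\<in>S. \<exists>x y. s = fo s * x * e * y * fo s" using fo by blast
  from bchoice[OF c2] obtain xo where xo: "\<forall>s\<in>S. \<exists>y. s = fo s * xo s * e * y * fo s" by blast
  from bchoice[OF xo] obtain yo where yo: "\<forall>s\<in>S. s = fo s * xo s * e * yo s * fo s" by blast
  define \<alpha> where "\<alpha> s b = smul (Cf (fo s) s) (fo s * xo s * e) * b" for s b
  define \<alpha>c where "\<alpha>c s \<xi> = e * yo s * fo s * \<xi>" for s \<xi>
  have foeq: "fo s = f" if "f \<in> Es" "s \<in> Ff f" for f s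
  proof -
    have sS: "s \<in> S" unfolding S_def using that by blast
    then show ?thesis using uniq[of "fo s" f s] fo that by blast
  qed
  have r1: "rmap smul e (corner e e) (lideal e) (\<alpha> s)" for s
    unfolding rmap_def
  proof (intro conjI ballI allI)
    fix u assume "u \<in> corner e e"
    then obtain w where "u = e * w * e" unfolding corner_def by auto
    then have "\<alpha> s u = (smul (Cf (fo s) s) (fo s * xo s * e) * e * w) * e"
      unfolding \<alpha>_def by (simp add: mult.assoc)
    then show "\<alpha> s u \<in> lideal e" unfolding lideal_def by blast
  next
    fix u v show "\<alpha> s (u + v) = \<alpha> s u + \<alpha> s v" unfolding \<alpha>_def by (simp add: distrib_left)
  next
    fix c u show "\<alpha> s (smul c u) = smul c (\<alpha> s u)" unfolding \<alpha>_def by (simp add: mr)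
  next
    fix u b show "\<alpha> s (u * b) = \<alpha> s u * b" unfolding \<alpha>_def by (simp add: mult.assoc)
  qed
  have r2: "rmap smul e (lideal e) (corner e e) (\<alpha>c s)" for s
    unfolding rmap_def
  proof (intro conjI ballI allI)
    fix u assume "u \<in> lideal e"
    then obtain w where "u = w * e" unfolding lideal_def by auto
    then have "\<alpha>c s u = e * (yo s * fo s * w) * e"
      unfolding \<alpha>c_def by (simp add: mult.assoc)
    then show "\<alpha>c s u \<in> corner e e" unfolding corner_def by blast
  next
    fix u v show "\<alpha>c s (u + v) = \<alpha>c s u + \<alpha>c s v" unfolding \<alpha>c_def by (simp add: distrib_left)
  next
    fix c u show "\<alpha>c s (smul c u) = smul c (\<alpha>c s u)" unfolding \<alpha>c_def by (simp add: mr)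
  next
    fix u b show "\<alpha>c s (u * b) = \<alpha>c s u * b" unfolding \<alpha>c_def by (simp add: mult.assoc)
  qed
  have sumeq: "finite {s\<in>S. \<alpha>c s \<xi> \<noteq> 0} \<and> (\<Sum>s\<in>{s\<in>S. \<alpha>c s \<xi> \<noteq> 0}. \<alpha> s (\<alpha>c s \<xi>)) = \<xi>" for \<xi>
  proof -
    define D where "D = {f\<in>Es. f * \<xi> \<noteq> 0}"
    have Dfin: "finite D" and Dsum: "(\<Sum>f\<in>D. f * \<xi>) = \<xi>" using auf[of \<xi>] unfolding D_def by auto
    define T where "T = (\<Union>f\<in>D. Ff f)"
    have Tfin: "finite T" unfolding T_def using Dfin Ffin D_def by auto
    have suppT: "{s\<in>S. \<alpha>c s \<xi> \<noteq> 0} \<subseteq> T"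
    proof
      fix s assume s: "s \<in> {s\<in>S. \<alpha>c s \<xi> \<noteq> 0}"
      have "fo s * \<xi> \<noteq> 0"
      proof
        assume "fo s * \<xi> = 0"
        then have "\<alpha>c s \<xi> = e * yo s * (fo s * \<xi>)" unfolding \<alpha>c_def by (simp add: mult.assoc)
        then show False using s \<open>fo s * \<xi> = 0\<close> by simp
      qed
      then show "s \<in> T" unfolding T_def D_def using fo s by blast
    qed
    have TS: "T \<subseteq> S" unfolding T_def S_def D_def by blast
    have "(\<Sum>s\<in>{s\<in>S. \<alpha>c s \<xi> \<noteq> 0}. \<alpha> s (\<alpha>c s \<xi>)) = (\<Sum>s\<in>T. \<alpha> s (\<alpha>c s \<xi>))"
      using suppT Tfin TS by (intro sum.mono_neutral_left) (auto simp: \<alpha>_def)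
    also have "\<dots> = (\<Sum>f\<in>D. \<Sum>s\<in>Ff f. \<alpha> s (\<alpha>c s \<xi>))"
      unfolding T_def
    proof (rule sum.UNION_disjoint)
      show "finite D" by (rule Dfin)
      show "\<forall>f\<in>D. finite (Ff f)" using Ffin D_def by auto
      show "\<forall>f\<in>D. \<forall>f'\<in>D. f \<noteq> f' \<longrightarrow> Ff f \<inter> Ff f' = {}" using uniq D_def by blast
    qed
    also have "\<dots> = (\<Sum>f\<in>D. f * \<xi>)"
    proof (rule sum.cong[OF refl])
      fix f assume fD: "f \<in> D"
      then have fE: "f \<in> Es" unfolding D_def by auto
      have "(\<Sum>s\<in>Ff f. \<alpha> s (\<alpha>c s \<xi>)) = (\<Sum>s\<in>Ff f. smul (Cf f s) s * \<xi>)"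
      proof (rule sum.cong[OF refl])
        fix s assume sF: "s \<in> Ff f"
        have sS: "s \<in> S" unfolding S_def using fE sF by blast
        have fo_s: "fo s = f" using foeq[OF fE sF] .
        have sform: "s = f * xo s * e * yo s * f" using yo sS fo_s by metis
        have "\<alpha> s (\<alpha>c s \<xi>) = smul (Cf f s) (f * xo s * (e * e) * yo s * f * \<xi>)"
          unfolding \<alpha>_def \<alpha>c_def fo_s by (simp add: ml mult.assoc)
        also have "\<dots> = smul (Cf f s) s * \<xi>" using ee sform by (simp add: ml)
        finally show "\<alpha> s (\<alpha>c s \<xi>) = smul (Cf f s) s * \<xi>" .
      qed
      also have "\<dots> = (\<Sum>s\<in>Ff f. smul (Cf f s) s) * \<xi>" by (simp add: sum_distrib_right)
      also have "\<dots> = f * \<xi>" using Fsum[OF fE] by simp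
      finally show "(\<Sum>s\<in>Ff f. \<alpha> s (\<alpha>c s \<xi>)) = f * \<xi>" .
    qed
    also have "\<dots> = \<xi>" by (rule Dsum)
    finally show ?thesis using suppT Tfin finite_subset by blast
  qed
  have finb: "finite {s\<in>S. \<exists>b\<in>corner e e. x * \<alpha> s b \<noteq> 0} \<and>
              finite {s\<in>S. \<exists>\<xi>\<in>lideal e. \<alpha>c s (x * \<xi>) \<noteq> 0}" for x
  proof
    define DR where "DR = {f\<in>Es. x * f \<noteq> 0}"
    have "finite DR" using auf[of x] unfolding DR_def by auto
    then have fin: "finite (\<Union>f\<in>DR. Ff f)" using Ffin DR_def by auto
    have "{s\<in>S. \<exists>b\<in>corner e e. x * \<alpha> s b \<noteq> 0} \<subseteq> (\<Union>f\<in>DR. Ff f)"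
    proof
      fix s assume s: "s \<in> {s\<in>S. \<exists>b\<in>corner e e. x * \<alpha> s b \<noteq> 0}"
      then obtain b where b: "x * \<alpha> s b \<noteq> 0" by auto
      have "x * fo s \<noteq> 0"
      proof
        assume z: "x * fo s = 0"
        have "x * \<alpha> s b = smul (Cf (fo s) s) ((x * fo s) * xo s * e * b)"
          unfolding \<alpha>_def by (simp add: mr ml mult.assoc)
        then show False using z b by simp
      qed
      then show "s \<in> (\<Union>f\<in>DR. Ff f)" unfolding DR_def using fo s by blast
    qed
    then show "finite {s\<in>S. \<exists>b\<in>corner e e. x * \<alpha> s b \<noteq> 0}" using fin finite_subset by blast
  next
    define DL where "DL = {f\<in>Es. f * x \<noteq> 0}"
    have "finite DL" using auf[of x] unfolding DL_def by auto
    then have fin: "finite (\<Union>f\<in>DL. Ff f)" using Ffin DL_def by auto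
    have "{s\<in>S. \<exists>\<xi>\<in>lideal e. \<alpha>c s (x * \<xi>) \<noteq> 0} \<subseteq> (\<Union>f\<in>DL. Ff f)"
    proof
      fix s assume s: "s \<in> {s\<in>S. \<exists>\<xi>\<in>lideal e. \<alpha>c s (x * \<xi>) \<noteq> 0}"
      then obtain \<xi> where b: "\<alpha>c s (x * \<xi>) \<noteq> 0" by auto
      have "fo s * x \<noteq> 0"
      proof
        assume z: "fo s * x = 0"
        have "\<alpha>c s (x * \<xi>) = e * yo s * (fo s * x) * \<xi>"
          unfolding \<alpha>c_def by (simp add: mult.assoc)
        then show False using z b by simp
      qed
      then show "s \<in> (\<Union>f\<in>DL. Ff f)" unfolding DL_def using fo s by blast
    qed
    then show "finite {s\<in>S. \<exists>\<xi>\<in>lideal e. \<alpha>c s (x * \<xi>) \<noteq> 0}" using fin finite_subset by blast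
  qed
  have "left_coord_system smul e S \<alpha> \<alpha>c"
    unfolding left_coord_system_def using r1 r2 sumeq finb by blast
  then show ?thesis by blast
qed

end



lemma rmodD:
  assumes "rmod smul e M"
  shows "cvs M"
    and "b \<in> corner e e \<Longrightarrow> u \<in> mcarrier M \<Longrightarrow> mact M b u \<in> mcarrier M"
    and "b \<in> corner e e \<Longrightarrow> u \<in> mcarrier M \<Longrightarrow> v \<in> mcarrier M \<Longrightarrow>
         mact M b (madd M u v) = madd M (mact M b u) (mact M b v)"
    and "b \<in> corner e e \<Longrightarrow> b' \<in> corner e e \<Longrightarrow> u \<in> mcarrier M \<Longrightarrow>
         mact M (b + b') u = madd M (mact M b u) (mact M b' u)"
    and "b \<in> corner e e \<Longrightarrow> u \<in> mcarrier M \<Longrightarrow> mact M (smul c b) u = mscal M c (mact M b u)"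
    and "b \<in> corner e e \<Longrightarrow> b' \<in> corner e e \<Longrightarrow> u \<in> mcarrier M \<Longrightarrow>
         mact M (b * b') u = mact M b' (mact M b u)"
  using assms unfolding rmod_def Let_def by blast+

context calgl
begin

lemma corner_add: "b \<in> corner e e \<Longrightarrow> b' \<in> corner e e \<Longrightarrow> b + b' \<in> corner e e"
proof -
  assume "b \<in> corner e e" "b' \<in> corner e e"
  then obtain w w' where "b = e * w * e" "b' = e * w' * e" unfolding corner_def by auto
  then have "b + b' = e * (w + w') * e" by (simp add: distrib_left distrib_right)
  then show ?thesis unfolding corner_def by blast
qed

lemma corner_0: "0 \<in> corner e e"
  unfolding corner_def by (auto intro!: exI[of _ 0])

lemma corner_sc: "b \<in> corner e e \<Longrightarrow> smul c b \<in> corner e e"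
proof -
  assume "b \<in> corner e e"
  then obtain w where "b = e * w * e" unfolding corner_def by auto
  then have "smul c b = e * smul c w * e" by (simp add: ml mr)
  then show ?thesis unfolding corner_def by blast
qed

lemma corner_mult: "b \<in> corner e e \<Longrightarrow> b' \<in> corner e e \<Longrightarrow> b * b' \<in> corner e e"
proof -
  assume "b \<in> corner e e" "b' \<in> corner e e"
  then obtain w w' where "b = e * w * e" "b' = e * w' * e" unfolding corner_def by auto
  then have "b * b' = e * (w * e * e * w') * e" by (simp add: mult.assoc)
  then show ?thesis unfolding corner_def by blast
qed

lemma corner_e: "e * e = e \<Longrightarrow> b \<in> corner e e \<Longrightarrow> e * b = b"
proof -
  assume ee: "e * e = e" and "b \<in> corner e e"
  then obtain w where b: "b = e * w * e" unfolding corner_def by auto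
  have "e * (e * w * e) = (e * e) * w * e" by (simp add: mult.assoc)
  then show ?thesis using b ee by simp
qed

lemma cvs_Ae: "cvs (Ae_right smul e)"
  unfolding cvs_def Let_def Ae_right_def
  by (auto simp: algebra_simps intro!: bexI[of _ "- _"])

lemma msum_Ae:
  assumes "finite A" "\<forall>i\<in>A. g i \<in> lideal e"
  shows "msum (Ae_right smul e) g A = sum g A"
  using assms
proof (induction A rule: finite_induct)
  case empty
  then show ?case by (simp add: Ae_right_def msum_def)
next
  case (insert x F)
  interpret m: cvsl "Ae_right smul e" by (rule cvsl.intro[OF cvs_Ae])
  show ?case using insert m.msum_insert[of F x g] by (simp add: Ae_right_def)
qed

lemma lcs_proj:
  assumes ee: "e * e = e" and lcs: "left_coord_system smul e I \<alpha> \<alpha>c"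
  shows "right_projective_wrt smul e (Ae_right smul e) N P"
  unfolding right_projective_wrt_def
proof (intro allI impI)
  fix g f
  assume H: "rmod smul e N \<and> rmod smul e P \<and> rhom smul e N P g \<and> g ` mcarrier N = mcarrier P \<and>
    rhom smul e (Ae_right smul e) P f"
  have rN: "rmod smul e N" and rP: "rmod smul e P" and gh: "rhom smul e N P g"
    and gs: "g ` mcarrier N = mcarrier P" and fh: "rhom smul e (Ae_right smul e) P f"
    using H by auto
  interpret n: cvsl N by (rule cvsl.intro[OF rmodD(1)[OF rN]])
  interpret p: cvsl P by (rule cvsl.intro[OF rmodD(1)[OF rP]])
  have cvsM: "cvs (Ae_right smul e)" by (rule cvs_Ae)
  have MC: "mcarrier (Ae_right smul e) = lideal e" and Madd: "madd (Ae_right smul e) = (+)"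
    and Mact: "mact (Ae_right smul e) b u = u * b" for b u
    by (simp_all add: Ae_right_def)
  have g_in: "u \<in> mcarrier N \<Longrightarrow> g u \<in> mcarrier P"
    and g_add: "u \<in> mcarrier N \<Longrightarrow> v \<in> mcarrier N \<Longrightarrow> g (madd N u v) = madd P (g u) (g v)"
    and g_act: "b \<in> corner e e \<Longrightarrow> u \<in> mcarrier N \<Longrightarrow> g (mact N b u) = mact P b (g u)" for u v b
    using gh unfolding rhom_def by auto
  have f_in: "u \<in> lideal e \<Longrightarrow> f u \<in> mcarrier P"
    and f_add: "u \<in> lideal e \<Longrightarrow> v \<in> lideal e \<Longrightarrow> f (u + v) = madd P (f u) (f v)"
    and f_act: "b \<in> corner e e \<Longrightarrow> u \<in> lideal e \<Longrightarrow> f (u * b) = mact P b (f u)" for u v b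
    using fh unfolding rhom_def by (auto simp: MC Madd Mact)
  have rm1: "rmap smul e (corner e e) (lideal e) (\<alpha> i)" if "i \<in> I" for i
    using lcs that unfolding left_coord_system_def by auto
  have rm2: "rmap smul e (lideal e) (corner e e) (\<alpha>c i)" if "i \<in> I" for i
    using lcs that unfolding left_coord_system_def by auto
  have \<alpha>_in: "\<alpha> i u \<in> lideal e" if "i \<in> I" "u \<in> corner e e" for i u
    using rm1[OF that(1)] that(2) unfolding rmap_def by auto
  have \<alpha>_mul: "\<alpha> i (u * b) = \<alpha> i u * b" if "i \<in> I" "u \<in> corner e e" "b \<in> corner e e" for i u b
    using rm1[OF that(1)] that(2,3) unfolding rmap_def by auto
  have \<alpha>c_in: "\<alpha>c i u \<in> corner e e" if "i \<in> I" "u \<in> lideal e" for i u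
    using rm2[OF that(1)] that(2) unfolding rmap_def by auto
  have \<alpha>c_add: "\<alpha>c i (u + v) = \<alpha>c i u + \<alpha>c i v" if "i \<in> I" "u \<in> lideal e" "v \<in> lideal e" for i u v
    using rm2[OF that(1)] that(2,3) unfolding rmap_def by auto
  have \<alpha>c_sc: "\<alpha>c i (smul c u) = smul c (\<alpha>c i u)" if "i \<in> I" "u \<in> lideal e" for i u c
    using rm2[OF that(1)] that(2) unfolding rmap_def by auto
  have \<alpha>c_mul: "\<alpha>c i (u * b) = \<alpha>c i u * b" if "i \<in> I" "u \<in> lideal e" "b \<in> corner e e" for i u b
    using rm2[OF that(1)] that(2,3) unfolding rmap_def by auto
  have fin: "finite {i\<in>I. \<alpha>c i \<xi> \<noteq> 0}" and recon: "(\<Sum>i\<in>{i\<in>I. \<alpha>c i \<xi> \<noteq> 0}. \<alpha> i (\<alpha>c i \<xi>)) = \<xi>"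
    if "\<xi> \<in> lideal e" for \<xi>
    using lcs that unfolding left_coord_system_def by auto
  have eB: "e \<in> corner e e" unfolding corner_def using ee by (metis (mono_tags, lifting) mem_Collect_eq)
  have "\<forall>i\<in>I. \<exists>n. n \<in> mcarrier N \<and> g n = f (\<alpha> i e)"
  proof
    fix i assume i: "i \<in> I"
    have "f (\<alpha> i e) \<in> mcarrier P" using f_in \<alpha>_in[OF i eB] by blast
    then show "\<exists>n. n \<in> mcarrier N \<and> g n = f (\<alpha> i e)" using gs by (metis imageE)
  qed
  from bchoice[OF this] obtain nn where nn: "\<forall>i\<in>I. nn i \<in> mcarrier N \<and> g (nn i) = f (\<alpha> i e)" by blast
  have nn_in: "i \<in> I \<Longrightarrow> nn i \<in> mcarrier N" for i using nn by auto
  define T where "T \<xi> = {i\<in>I. \<alpha>c i \<xi> \<noteq> 0}" for \<xi>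
  define t where "t \<xi> i = mact N (\<alpha>c i \<xi>) (nn i)" for \<xi> i
  define h where "h \<xi> = msum N (t \<xi>) (T \<xi>)" for \<xi>
  have t_in: "t \<xi> i \<in> mcarrier N" if "i \<in> I" "\<xi> \<in> lideal e" for \<xi> i
    unfolding t_def using rmodD(2)[OF rN \<alpha>c_in[OF that] nn_in[OF that(1)]] .
  have act0: "mact N 0 u = mzero N" if u: "u \<in> mcarrier N" for u
  proof -
    have "mact N (0 + 0) u = madd N (mact N 0 u) (mact N 0 u)"
      using rmodD(4)[OF rN corner_0 corner_0 u] .
    then show ?thesis using n.cancel_self rmodD(2)[OF rN corner_0 u] by simp
  qed
  have hT: "h \<xi> = msum N (t \<xi>) U" if "\<xi> \<in> lideal e" "finite U" "T \<xi> \<subseteq> U" "U \<subseteq> I" for \<xi> U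
  proof -
    have "msum N (t \<xi>) U = msum N (t \<xi>) (T \<xi>)"
    proof (rule n.msum_superset[OF that(2,3)])
      show "\<forall>i\<in>T \<xi>. t \<xi> i \<in> mcarrier N" using t_in that T_def by auto
      show "\<forall>i\<in>U - T \<xi>. t \<xi> i = mzero N"
        using that act0 nn_in unfolding T_def t_def by auto
    qed
    then show ?thesis unfolding h_def by simp
  qed
  have Tfin: "finite (T \<xi>)" if "\<xi> \<in> lideal e" for \<xi> using fin[OF that] T_def by simp
  have TI: "T \<xi> \<subseteq> I" for \<xi> unfolding T_def by auto
  have h_in: "h \<xi> \<in> mcarrier N" if "\<xi> \<in> lideal e" for \<xi>
    unfolding h_def using t_in that TI by (intro n.msum_in) auto
  have h_add: "h (u + v) = madd N (h u) (h v)" if uv: "u \<in> lideal e" "v \<in> lideal e" for u v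
  proof -
    define U where "U = T u \<union> T v \<union> T (u + v)"
    have U: "finite U" "U \<subseteq> I" unfolding U_def using Tfin uv TI by auto
    have "h (u + v) = msum N (t (u + v)) U" using hT[of "u + v" U] U uv unfolding U_def by auto
    also have "\<dots> = msum N (\<lambda>i. madd N (t u i) (t v i)) U"
      using U uv t_in
      by (intro n.msum_cong) (auto simp: t_def \<alpha>c_add rmodD(4)[OF rN] \<alpha>c_in nn_in)
    also have "\<dots> = madd N (msum N (t u) U) (msum N (t v) U)"
      using U uv t_in by (intro n.msum_add) auto
    also have "\<dots> = madd N (h u) (h v)"
    proof -
      have "T u \<subseteq> U" "T v \<subseteq> U" unfolding U_def by auto
      then show ?thesis using hT[OF uv(1) U(1) _ U(2)] hT[OF uv(2) U(1) _ U(2)] by simp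
    qed
    finally show ?thesis .
  qed
  have h_sc: "h (smul c u) = mscal N c (h u)" if u: "u \<in> lideal e" for u c
  proof -
    define U where "U = T u \<union> T (smul c u)"
    have U: "finite U" "U \<subseteq> I" unfolding U_def using Tfin u TI by auto
    have "h (smul c u) = msum N (t (smul c u)) U" using hT[of "smul c u" U] U u unfolding U_def by auto
    also have "\<dots> = msum N (\<lambda>i. mscal N c (t u i)) U"
      using U u t_in
      by (intro n.msum_cong) (auto simp: t_def \<alpha>c_sc rmodD(5)[OF rN] \<alpha>c_in nn_in)
    also have "\<dots> = mscal N c (msum N (t u) U)"
      using U u t_in
      by (intro msum_hom[OF n.cvs n.cvs, symmetric]) (auto simp: n.sc_add)
    also have "\<dots> = mscal N c (h u)"
    proof -
      have "T u \<subseteq> U" unfolding U_def by auto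
      then show ?thesis using hT[OF u U(1) _ U(2)] by simp
    qed
    finally show ?thesis .
  qed
  have h_act: "h (u * b) = mact N b (h u)" if u: "u \<in> lideal e" and b: "b \<in> corner e e" for u b
  proof -
    have ub: "u * b \<in> lideal e"
    proof -
      obtain w where "b = e * w * e" using b unfolding corner_def by auto
      then have "u * b = (u * e * w) * e" by (simp add: mult.assoc)
      then show ?thesis unfolding lideal_def by blast
    qed
    define U where "U = T u \<union> T (u * b)"
    have U: "finite U" "U \<subseteq> I" unfolding U_def using Tfin u ub TI by auto
    have "h (u * b) = msum N (t (u * b)) U" using hT[of "u * b" U] U ub unfolding U_def by auto
    also have "\<dots> = msum N (\<lambda>i. mact N b (t u i)) U"
      using U u t_in b ub
      by (intro n.msum_cong) (auto simp: t_def \<alpha>c_mul rmodD(6)[OF rN] \<alpha>c_in nn_in)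
    also have "\<dots> = mact N b (msum N (t u) U)"
      using U u t_in b
      by (intro msum_hom[OF n.cvs n.cvs, symmetric]) (auto simp: rmodD(2,3)[OF rN])
    also have "\<dots> = mact N b (h u)"
    proof -
      have "T u \<subseteq> U" unfolding U_def by auto
      then show ?thesis using hT[OF u U(1) _ U(2)] by simp
    qed
    finally show ?thesis .
  qed
  have rh: "rhom smul e (Ae_right smul e) N h"
    unfolding rhom_def MC Madd Mact
    using h_in h_add h_sc h_act by (auto simp: Ae_right_def)
  have lift: "g (h \<xi>) = f \<xi>" if \<xi>: "\<xi> \<in> lideal e" for \<xi>
  proof -
    have "g (h \<xi>) = msum P (\<lambda>i. g (t \<xi> i)) (T \<xi>)"
      unfolding h_def using Tfin[OF \<xi>] t_in \<xi> TI
      by (intro msum_hom[OF n.cvs p.cvs]) (auto simp: g_in g_add)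
    also have "\<dots> = msum P (\<lambda>i. f (\<alpha> i (\<alpha>c i \<xi>))) (T \<xi>)"
    proof (intro p.msum_cong Tfin[OF \<xi>] ballI)
      fix i assume i: "i \<in> T \<xi>"
      then have iI: "i \<in> I" using TI by auto
      have cB: "\<alpha>c i \<xi> \<in> corner e e" using \<alpha>c_in[OF iI \<xi>] .
      show "g (t \<xi> i) \<in> mcarrier P" using g_in t_in[OF iI \<xi>] by blast
      have "g (t \<xi> i) = mact P (\<alpha>c i \<xi>) (g (nn i))" unfolding t_def using g_act cB nn_in iI by blast
      also have "\<dots> = mact P (\<alpha>c i \<xi>) (f (\<alpha> i e))" using nn iI by simp
      also have "\<dots> = f (\<alpha> i e * \<alpha>c i \<xi>)" using f_act[OF cB \<alpha>_in[OF iI eB]] by simp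
      also have "\<alpha> i e * \<alpha>c i \<xi> = \<alpha> i (e * \<alpha>c i \<xi>)" using \<alpha>_mul[OF iI eB cB] by simp
      also have "e * \<alpha>c i \<xi> = \<alpha>c i \<xi>" using corner_e[OF ee cB] .
      finally show "g (t \<xi> i) = f (\<alpha> i (\<alpha>c i \<xi>))" .
    qed
    also have aa: "\<forall>i\<in>T \<xi>. \<alpha> i (\<alpha>c i \<xi>) \<in> lideal e"
      using TI \<alpha>_in \<alpha>c_in \<xi> by blast
    have "msum P (\<lambda>i. f (\<alpha> i (\<alpha>c i \<xi>))) (T \<xi>) = f (msum (Ae_right smul e) (\<lambda>i. \<alpha> i (\<alpha>c i \<xi>)) (T \<xi>))"
      using Tfin[OF \<xi>] aa
      by (intro msum_hom[OF cvsM p.cvs, symmetric]) (auto simp: MC Madd f_in f_add)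
    also have "msum (Ae_right smul e) (\<lambda>i. \<alpha> i (\<alpha>c i \<xi>)) (T \<xi>) = (\<Sum>i\<in>T \<xi>. \<alpha> i (\<alpha>c i \<xi>))"
      using Tfin[OF \<xi>] aa by (intro msum_Ae) auto
    also have "\<dots> = \<xi>" using recon[OF \<xi>] unfolding T_def .
    finally show ?thesis .
  qed
  show "\<exists>h. rhom smul e (Ae_right smul e) N h \<and> (\<forall>u\<in>mcarrier (Ae_right smul e). g (h u) = f u)"
    using rh lift MC by auto
qed

end

theorem theorem6p5:
  fixes smul :: "complex \<Rightarrow> 'a::ring \<Rightarrow> 'a" and e :: 'a
  assumes "calg smul"
    and "strongly_AUF smul"
    and "generating smul e"
  shows "(\<exists>(I :: 'a set set) \<alpha> \<alpha>c. left_coord_system smul e I \<alpha> \<alpha>c) \<and>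
         (\<forall>(N :: ('n, 'a) amod) (P :: ('p, 'a) amod). right_projective_wrt smul e (Ae_right smul e) N P)"
proof -
  interpret calgl smul by (rule calgl.intro[OF assms(1)])
  obtain Es :: "'a set" where idem: "\<forall>e\<in>Es. e * e = e"
    and orth: "\<forall>e\<in>Es. \<forall>f\<in>Es. e \<noteq> f \<longrightarrow> e * f = 0"
    and sp: "UNIV \<subseteq> vs.span (\<Union>e\<in>Es. \<Union>f\<in>Es. corner e f)"
    using assms(2) unfolding strongly_AUF_def AUF_def by blast
  have ee: "e * e = e" using assms(3) unfolding generating_def by auto
  obtain S :: "'a set" and \<alpha> \<alpha>c where lcs: "left_coord_system smul e S \<alpha> \<alpha>c"
    using coord_exists[OF orth idem sp assms(3)] by blast
  have 1: "\<exists>(I :: 'a set set) \<alpha> \<alpha>c. left_coord_system smul e I \<alpha> \<alpha>c"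
    using lcs_reindex[OF lcs] by blast
  have 2: "\<forall>(N :: ('n, 'a) amod) (P :: ('p, 'a) amod). right_projective_wrt smul e (Ae_right smul e) N P"
    using lcs_proj[OF ee lcs] by blast
  show ?thesis using 1 2 by blast
qed

end
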